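(* Let $k$ be a positive integer and let $\mathcal{A}$ be a family of $3$-element subsets of $[k]=\{1,\dots,k\}$ with the following property: whenever $[k]=R_1\cup R_2\cup R_3$ is a partition of $[k]$ into three non-empty sets, there exists $A\in\mathcal{A}$ with $A\cap R_i\neq\emptyset$ for $i=1,2,3$. Then $|\mathcal{A}|\geq \frac{k(k-2)}{3}$. *)

theory Defs
  imports Complex_Main
begin

end

theory Submission
  imports Defs
begin

lemma grow:
  fixes k x :: nat and \<A> :: "nat set set"
  assumes x: "x \<in> {1..k}"
    and A3: "\<forall>A\<in>\<A>. A \<subseteq> {1..k} \<and> card A = 3"
    and P: "\<forall>R1 R2 R3. R1 \<noteq> {} \<and> R2 \<noteq> {} \<and> R3 \<noteq> {} \<and>
           R1 \<inter> R2 = {} \<and> R1 \<inter> R3 = {} \<and> R2 \<inter> R3 = {} \<and>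
           R1 \<union> R2 \<union> R3 = {1..k} \<longrightarrow>
           (\<exists>A\<in>\<A>. A \<inter> R1 \<noteq> {} \<and> A \<inter> R2 \<noteq> {} \<and> A \<inter> R3 \<noteq> {})"
  shows "1 \<le> m \<Longrightarrow> m \<le> k - 1 \<Longrightarrow> \<exists>S. S \<subseteq> {1..k} - {x} \<and> card S = m \<and>
           card {A\<in>\<A>. x \<in> A \<and> A \<subseteq> insert x S} \<ge> m - 1"
proof (induction m)
  case 0
  then show ?case by simp
next
  case (Suc m)
  have finA: "finite \<A>"
    by (rule finite_subset[of _ "Pow {1..k}"]) (use A3 in auto)
  show ?case
  proof (cases "m = 0")
    case True
    have "{1..k} - {x} \<noteq> {}"
    proof
      assume "{1..k} - {x} = {}"
      then have "{1..k} \<subseteq> {x}" by blast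
      then have "card {1..k} \<le> card {x}" by (intro card_mono) auto
      then show False using Suc.prems True by simp
    qed
    then obtain y where "y \<in> {1..k} - {x}" by blast
    then show ?thesis using True by (intro exI[of _ "{y}"]) auto
  next
    case False
    then obtain S where S: "S \<subseteq> {1..k} - {x}" "card S = m"
      "card {A\<in>\<A>. x \<in> A \<and> A \<subseteq> insert x S} \<ge> m - 1"
      using Suc by auto
    have finS: "finite S" using S(1) finite_subset by blast
    have Sne: "S \<noteq> {}" using S(2) False by auto
    have "card ({1..k} - {x}) = k - 1" using x by simp
    then have "card S < card ({1..k} - {x})" using S(2) Suc.prems by simp
    then have Tne: "({1..k} - {x}) - S \<noteq> {}" using S(1) by auto
    have "\<exists>A\<in>\<A>. A \<inter> {x} \<noteq> {} \<and> A \<inter> S \<noteq> {} \<and> A \<inter> (({1..k} - {x}) - S) \<noteq> {}"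
      using P[rule_format, of "{x}" S "({1..k} - {x}) - S"] Sne Tne S(1) x by blast
    then obtain A a b where A: "A \<in> \<A>" "x \<in> A" "a \<in> A" "a \<in> S" "b \<in> A"
      "b \<in> ({1..k} - {x}) - S" by blast
    have "x \<noteq> a" "x \<noteq> b" "a \<noteq> b" using A S(1) by auto
    then have xab: "card {x, a, b} = 3" by simp
    have "{x, a, b} \<subseteq> A" using A by auto
    moreover have "card A = 3" "finite A" using A3 A(1) by (auto intro: finite_subset)
    ultimately have Aeq: "A = {x, a, b}" using xab by (metis card_subset_eq)
    define S' where "S' = insert b S"
    have "A \<notin> {A\<in>\<A>. x \<in> A \<and> A \<subseteq> insert x S}" using A by auto
    moreover have "A \<in> {A\<in>\<A>. x \<in> A \<and> A \<subseteq> insert x S'}" using A Aeq unfolding S'_def by auto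
    moreover have "{A\<in>\<A>. x \<in> A \<and> A \<subseteq> insert x S} \<subseteq> {A\<in>\<A>. x \<in> A \<and> A \<subseteq> insert x S'}"
      unfolding S'_def by auto
    ultimately have "{A\<in>\<A>. x \<in> A \<and> A \<subseteq> insert x S} \<subset> {A\<in>\<A>. x \<in> A \<and> A \<subseteq> insert x S'}"
      by blast
    then have "card {A\<in>\<A>. x \<in> A \<and> A \<subseteq> insert x S} < card {A\<in>\<A>. x \<in> A \<and> A \<subseteq> insert x S'}"
      by (intro psubset_card_mono) (use finA in auto)
    moreover have "card S' = Suc m" using S(2) A(6) finS unfolding S'_def by simp
    moreover have "S' \<subseteq> {1..k} - {x}" using S(1) A(6) unfolding S'_def by auto
    ultimately show ?thesis using S(3) by (intro exI[of _ S']) auto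
  qed
qed

theorem lemma1:
  fixes k :: nat and \<A> :: "nat set set"
  assumes "k > 0"
    and "\<forall>A\<in>\<A>. A \<subseteq> {1..k} \<and> card A = 3"
    and "\<forall>R1 R2 R3. R1 \<noteq> {} \<and> R2 \<noteq> {} \<and> R3 \<noteq> {} \<and>
           R1 \<inter> R2 = {} \<and> R1 \<inter> R3 = {} \<and> R2 \<inter> R3 = {} \<and>
           R1 \<union> R2 \<union> R3 = {1..k} \<longrightarrow>
           (\<exists>A\<in>\<A>. A \<inter> R1 \<noteq> {} \<and> A \<inter> R2 \<noteq> {} \<and> A \<inter> R3 \<noteq> {})"
  shows "real (card \<A>) \<ge> real k * (real k - 2) / 3"
proof (cases "k = 1")
  case True
  then show ?thesis by simp
next
  case False
  then have k2: "k \<ge> 2" using assms(1) by simp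
  have finA: "finite \<A>"
    by (rule finite_subset[of _ "Pow {1..k}"]) (use assms(2) in auto)
  have deg: "card {A\<in>\<A>. x \<in> A} \<ge> k - 2" if x: "x \<in> {1..k}" for x
  proof -
    obtain S where S: "S \<subseteq> {1..k} - {x}" "card S = k - 1"
      "card {A\<in>\<A>. x \<in> A \<and> A \<subseteq> insert x S} \<ge> k - 1 - 1"
    proof -
      have "1 \<le> k - 1" using k2 by simp
      from grow[OF x assms(2) assms(3) this order.refl] that show ?thesis by blast
    qed
    have "card {A\<in>\<A>. x \<in> A \<and> A \<subseteq> insert x S} \<le> card {A\<in>\<A>. x \<in> A}"
      by (intro card_mono) (use finA in auto)
    then show ?thesis using S(3) by simp
  qed
  have "(\<Sum>x\<in>{1..k}. card {A\<in>\<A>. x \<in> A}) = (\<Sum>x\<in>{1..k}. \<Sum>A\<in>\<A>. if x \<in> A then 1 else 0)"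
    by (intro sum.cong refl) (simp add: sum.inter_filter[symmetric] finA)
  also have "\<dots> = (\<Sum>A\<in>\<A>. \<Sum>x\<in>{1..k}. if x \<in> A then 1 else 0)"
    by (rule sum.swap)
  also have "\<dots> = (\<Sum>A\<in>\<A>. card {x\<in>{1..k}. x \<in> A})"
    by (intro sum.cong refl) (simp add: sum.inter_filter[symmetric])
  also have "\<dots> = (\<Sum>A\<in>\<A>. 3)"
  proof (intro sum.cong refl)
    fix A assume "A \<in> \<A>"
    then have "A \<subseteq> {1..k}" "card A = 3" using assms(2) by auto
    then have "{x\<in>{1..k}. x \<in> A} = A" "card A = 3" by auto
    then show "card {x\<in>{1..k}. x \<in> A} = 3" by simp
  qed
  also have "\<dots> = 3 * card \<A>" by simp
  finally have eq: "(\<Sum>x\<in>{1..k}. card {A\<in>\<A>. x \<in> A}) = 3 * card \<A>" .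
  have "(\<Sum>x\<in>{1..k}. k - 2) \<le> (\<Sum>x\<in>{1..k}. card {A\<in>\<A>. x \<in> A})"
    by (intro sum_mono deg)
  then have "k * (k - 2) \<le> 3 * card \<A>" using eq by simp
  then have "real (k * (k - 2)) \<le> real (3 * card \<A>)" by linarith
  then have "real k * (real k - 2) \<le> 3 * real (card \<A>)" using k2 by (simp add: of_nat_diff)
  then show ?thesis by simp
qed

end
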